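(* Let $K,N_\text{t}\ge1$, let $\mathbf{h}_1,\dots,\mathbf{h}_K\in\mathbb{C}^{N_\text{t}}$, let $\mathbf{H}\triangleq[\mathbf{h}_1,\dots,\mathbf{h}_K]\in\mathbb{C}^{N_\text{t}\times K}$ and let $\mathcal{S}\triangleq\mathrm{col}(\mathbf{H})$ be its column space. Let $\lambda\in[0,1]$, $T_w>0$, $\eta_{\mathrm{BS}}\in(0,1]$, $P_{w,0}>0$, $P_{w,\max}>0$, $a_{\max}>0$, $\beta_{\max}>0$, and for each $k$ let $u_k>0$ and $\chi_k\ge0$. Consider the problem (P2) \[ \underset{\mathbf{f}\in\mathbb{C}^{N_\text{t}}}{\text{minimize}}~F(\mathbf{f})\triangleq\lambda\frac{T_w}{\eta_{\mathrm{BS}}}P_{w,0}\|\mathbf{f}\|_2^2+(1-\lambda)\sum_{k=1}^K\frac{\chi_k}{|\mathbf{h}_k^{\mathsf H}\mathbf{f}|^2} \] subject to $|\mathbf{h}_k^{\mathsf H}\mathbf{f}|^2\ge u_k^2/\beta_{\max}^2$ for all $k$, $P_{w,0}\|\mathbf{f}\|_2^2\le P_{w,\max}$, and $|\mathbf{h}_k^{\mathsf H}\mathbf{f}|\le a_{\max}$ for all $k$. For any point $\mathbf{f}^{(i)}\in\mathbb{C}^{N_\text{t}}$, write $a_k^{(i)}=\mathbf{h}_k^{\mathsf H}\mathbf{f}^{(i)}$ and define the affine function \[ \underline{u}_k^{(i)}(\mathbf{f})\triangleq|a_k^{(i)}|^2+2\Re\{(a_k^{(i)})^\ast(\mathbf{h}_k^{\mathsf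 H}\mathbf{f}-a_k^{(i)})\}, \] and consider the subproblem (P2-SCA) \[ \underset{\mathbf{f}\in\mathbb{C}^{N_\text{t}}}{\text{minimize}}~\lambda\frac{T_w}{\eta_{\mathrm{BS}}}P_{w,0}\|\mathbf{f}\|_2^2+(1-\lambda)\sum_{k=1}^K\frac{\chi_k}{\underline{u}_k^{(i)}(\mathbf{f})} \] subject to $\underline{u}_k^{(i)}(\mathbf{f})\ge u_k^2/\beta_{\max}^2$ for all $k$, $P_{w,0}\|\mathbf{f}\|_2^2\le P_{w,\max}$, and $|\mathbf{h}_k^{\mathsf H}\mathbf{f}|\le a_{\max}$ for all $k$. Then: if (P2) is feasible, its minimum value is attained and at least one minimizer lies in $\mathcal{S}$. Moreover, for any $\mathbf{f}^{(i)}$, if (P2-SCA) is feasible, it has a minimizer in $\mathcal{S}$.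
   Context: $(\cdot)^{\mathsf H}$ denotes Hermitian transpose, $(\cdot)^\ast$ complex conjugate, $\Re\{\cdot\}$ real part, $\|\cdot\|_2$ the Euclidean norm. In the paper, $\chi_k=c_ku_k^2$ with $c_k>0$, $\mathbf{f}$ is the BS beamformer, and $\mathbf{f}^{(i)}$ is the current iterate of a successive convex approximation scheme. *)

theory Defs
  imports "HOL-Analysis.Analysis"
begin

definition herm :: "complex ^ 'n \<Rightarrow> complex ^ 'n \<Rightarrow> complex" where
  "herm h f = (\<Sum>j\<in>UNIV. cnj (h $ j) * f $ j)"

definition colspace :: "('k::finite \<Rightarrow> complex ^ 'n) \<Rightarrow> (complex ^ 'n) set" where
  "colspace h = {f. \<exists>c :: 'k \<Rightarrow> complex. f = (\<Sum>k\<in>UNIV. c k *s h k)}"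

definition F_P2 :: "real \<Rightarrow> real \<Rightarrow> real \<Rightarrow> real \<Rightarrow> ('k::finite \<Rightarrow> real)
    \<Rightarrow> ('k \<Rightarrow> complex ^ 'n) \<Rightarrow> complex ^ 'n \<Rightarrow> real" where
  "F_P2 lam Tw eta Pw0 chi h f =
     lam * (Tw / eta) * Pw0 * (norm f)^2
     + (1 - lam) * (\<Sum>k\<in>UNIV. chi k / (cmod (herm (h k) f))^2)"

definition feasible_P2 :: "real \<Rightarrow> real \<Rightarrow> real \<Rightarrow> real \<Rightarrow> ('k::finite \<Rightarrow> real)
    \<Rightarrow> ('k \<Rightarrow> complex ^ 'n) \<Rightarrow> complex ^ 'n \<Rightarrow> bool" where
  "feasible_P2 Pw0 Pwmax amax betamax u h f \<longleftrightarrow>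
     (\<forall>k. (cmod (herm (h k) f))^2 \<ge> (u k)^2 / betamax^2)
     \<and> Pw0 * (norm f)^2 \<le> Pwmax
     \<and> (\<forall>k. cmod (herm (h k) f) \<le> amax)"

definition ulin :: "complex ^ 'n \<Rightarrow> complex ^ 'n \<Rightarrow> complex ^ 'n \<Rightarrow> real" where
  "ulin hk fi f = (let a = herm hk fi in
     (cmod a)^2 + 2 * Re (cnj a * (herm hk f - a)))"

definition F_SCA :: "real \<Rightarrow> real \<Rightarrow> real \<Rightarrow> real \<Rightarrow> ('k::finite \<Rightarrow> real)
    \<Rightarrow> ('k \<Rightarrow> complex ^ 'n) \<Rightarrow> complex ^ 'n \<Rightarrow> complex ^ 'n \<Rightarrow> real" where
  "F_SCA lam Tw eta Pw0 chi h fi f =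
     lam * (Tw / eta) * Pw0 * (norm f)^2
     + (1 - lam) * (\<Sum>k\<in>UNIV. chi k / ulin (h k) fi f)"

definition feasible_SCA :: "real \<Rightarrow> real \<Rightarrow> real \<Rightarrow> real \<Rightarrow> ('k::finite \<Rightarrow> real)
    \<Rightarrow> ('k \<Rightarrow> complex ^ 'n) \<Rightarrow> complex ^ 'n \<Rightarrow> complex ^ 'n \<Rightarrow> bool" where
  "feasible_SCA Pw0 Pwmax amax betamax u h fi f \<longleftrightarrow>
     (\<forall>k. ulin (h k) fi f \<ge> (u k)^2 / betamax^2)
     \<and> Pw0 * (norm f)^2 \<le> Pwmax
     \<and> (\<forall>k. cmod (herm (h k) f) \<le> amax)"

end

theory Submission imports Defs begin

lemma herm_add: "herm h (x + y) = herm h x + herm h y"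
  by (simp add: herm_def sum.distrib algebra_simps)

lemma inner_herm: "inner h z = Re (herm h z)"
  by (simp add: herm_def inner_vec_def inner_complex_def Re_sum)

lemma inner_herm_ii: "inner (\<i> *s h) z = Im (herm h z)"
  by (simp add: herm_def inner_vec_def inner_complex_def Im_sum)

lemma colspace_subspace: "subspace (colspace h)"
  unfolding subspace_def colspace_def
proof (intro conjI ballI allI)
  show "0 \<in> {f. \<exists>c. f = (\<Sum>k\<in>UNIV. c k *s h k)}"
    by (rule CollectI, rule exI[of _ "\<lambda>_. 0"], simp)
next
  fix x y assume "x \<in> {f. \<exists>c. f = (\<Sum>k\<in>UNIV. c k *s h k)}" "y \<in> {f. \<exists>c. f = (\<Sum>k\<in>UNIV. c k *s h k)}"
  then obtain a b where "x = (\<Sum>k\<in>UNIV. a k *s h k)" "y = (\<Sum>k\<in>UNIV. b k *s h k)" by auto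
  then show "x + y \<in> {f. \<exists>c. f = (\<Sum>k\<in>UNIV. c k *s h k)}"
  proof -
    have e: "(c + d) *s v = c *s v + d *s v" for c d and v :: "complex ^ 'n"
      by (simp add: vector_sadd_rdistrib)
    have "x + y = (\<Sum>k\<in>UNIV. (a k + b k) *s h k)"
      by (simp only: \<open>x = _\<close> \<open>y = _\<close> e sum.distrib)
    then show ?thesis by (intro CollectI exI[of _ "\<lambda>k. a k + b k"])
  qed
next
  fix r :: real and x assume "x \<in> {f. \<exists>c. f = (\<Sum>k\<in>UNIV. c k *s h k)}"
  then obtain a where "x = (\<Sum>k\<in>UNIV. a k *s h k)" by auto
  show "r *\<^sub>R x \<in> {f. \<exists>c. f = (\<Sum>k\<in>UNIV. c k *s h k)}"
  proof -
    have e: "r *\<^sub>R (c *s v) = (of_real r * c) *s v" for c and v :: "complex ^ 'n"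
      apply (rule iffD2[OF vec_eq_iff], rule allI)
      apply (simp only: vector_scaleR_component vector_smult_component)
      apply (simp add: scaleR_conv_of_real)
      done
    have "r *\<^sub>R x = (\<Sum>k\<in>UNIV. (of_real r * a k) *s h k)"
      by (simp only: \<open>x = _\<close> scaleR_sum_right e)
    then show ?thesis by (intro CollectI exI[of _ "\<lambda>k. of_real r * a k"])
  qed
qed

lemma h_in_colspace: "h k \<in> colspace h" "\<i> *s h k \<in> colspace h"
proof -
  have e: "(\<Sum>j\<in>UNIV. (if j = k then c else 0) *s h j) = c *s h k" for c
  proof -
    have "(\<Sum>j\<in>UNIV. (if j = k then c else 0) *s h j) = (\<Sum>j\<in>UNIV. if j = k then c *s h j else 0)"
      by (rule sum.cong) auto
    also have "\<dots> = c *s h k" by (subst sum.delta) auto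
    finally show ?thesis .
  qed
  have "h k = (\<Sum>j\<in>UNIV. (if j = k then 1 else 0) *s h j)" using e[of 1] by simp
  then show "h k \<in> colspace h" unfolding colspace_def
    by (intro CollectI exI[of _ "\<lambda>j. if j = k then 1 else 0"])
  have "\<i> *s h k = (\<Sum>j\<in>UNIV. (if j = k then \<i> else 0) *s h j)" using e[of \<i>] by simp
  then show "\<i> *s h k \<in> colspace h" unfolding colspace_def
    by (intro CollectI exI[of _ "\<lambda>j. if j = k then \<i> else 0"])
qed

lemma proj:
  fixes h :: "'k::finite \<Rightarrow> complex ^ 'n"
  shows "\<exists>p\<in>colspace h. (\<forall>k. herm (h k) p = herm (h k) f) \<and> norm p \<le> norm f"
proof -
  define S where "S = range h \<union> range (\<lambda>k. \<i> *s h k)"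
  obtain y z where y: "y \<in> span S" and z: "\<And>w. w \<in> span S \<Longrightarrow> orthogonal z w" and f: "f = y + z"
    using orthogonal_subspace_decomp_exists[of S f] by blast
  have "S \<subseteq> colspace h" unfolding S_def using h_in_colspace by blast
  then have sub: "span S \<subseteq> colspace h" using colspace_subspace by (rule span_minimal)
  have hz: "herm (h k) z = 0" for k
  proof -
    have "h k \<in> S" "\<i> *s h k \<in> S" unfolding S_def by simp_all
    then have "orthogonal z (h k)" "orthogonal z (\<i> *s h k)" using z span_base by blast+
    then have i1: "inner (h k) z = 0" and i2: "inner (\<i> *s h k) z = 0"
      unfolding orthogonal_def by (simp_all only: inner_commute)
    have "Re (herm (h k) z) = 0" using i1 by (simp only: inner_herm)
    moreover have "Im (herm (h k) z) = 0" using i2 by (simp only: inner_herm_ii)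
    ultimately show ?thesis by (simp add: complex_eq_iff)
  qed
  have eq: "\<forall>k. herm (h k) y = herm (h k) f" by (simp add: f herm_add hz)
  have "orthogonal y z" using z[OF y] by (simp add: orthogonal_commute)
  then have "(norm f)^2 = (norm y)^2 + (norm z)^2" unfolding f by (rule norm_add_Pythagorean)
  then have "(norm y)^2 \<le> (norm f)^2" by simp
  then have "norm y \<le> norm f" by (rule power2_le_imp_le) simp
  then show ?thesis using y sub eq by blast
qed

lemma herm_cont: "continuous_on UNIV (\<lambda>f. herm hk f)"
  unfolding herm_def by (intro continuous_intros)

lemma main_gen:
  fixes h :: "'k::finite \<Rightarrow> complex ^ 'n" and g :: "'k \<Rightarrow> complex \<Rightarrow> real"
  assumes gc: "\<And>k. continuous_on UNIV (g k)"
    and c: "\<And>k. c k > 0" and A: "A \<ge> 0" and Pz: "Pz > 0"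
    and ex: "\<exists>f. (\<forall>k. g k (herm (h k) f) \<ge> c k) \<and> Pz * (norm f)^2 \<le> Pwmax \<and> (\<forall>k. cmod (herm (h k) f) \<le> amax)"
  shows "\<exists>fopt \<in> colspace h. ((\<forall>k. g k (herm (h k) fopt) \<ge> c k) \<and> Pz * (norm fopt)^2 \<le> Pwmax \<and> (\<forall>k. cmod (herm (h k) fopt) \<le> amax))
     \<and> (\<forall>f. ((\<forall>k. g k (herm (h k) f) \<ge> c k) \<and> Pz * (norm f)^2 \<le> Pwmax \<and> (\<forall>k. cmod (herm (h k) f) \<le> amax)) \<longrightarrow>
        A * (norm fopt)^2 + B * (\<Sum>k\<in>UNIV. chi k / g k (herm (h k) fopt))
        \<le> A * (norm f)^2 + B * (\<Sum>k\<in>UNIV. chi k / g k (herm (h k) f)))"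
proof -
  define S where "S = {f. (\<forall>k. g k (herm (h k) f) \<ge> c k) \<and> Pz * (norm f)^2 \<le> Pwmax \<and> (\<forall>k. cmod (herm (h k) f) \<le> amax)}"
  define Obj where "Obj = (\<lambda>f. A * (norm f)^2 + B * (\<Sum>k\<in>UNIV. chi k / g k (herm (h k) f)))"
  have gcomp: "continuous_on UNIV (\<lambda>f. g k (herm (h k) f))" for k
    using continuous_on_compose2[OF gc herm_cont] by auto
  have hc: "continuous_on UNIV (\<lambda>f. cmod (herm (h k) f))" for k
    using continuous_on_norm[OF herm_cont] by auto
  have cl: "closed S"
    unfolding S_def
    by (intro closed_Collect_conj closed_Collect_all closed_Collect_le continuous_intros gcomp hc)
  have bd: "bounded S"
  proof -
    have "norm f \<le> sqrt (Pwmax / Pz)" if "f \<in> S" for f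
    proof -
      have "Pz * (norm f)^2 \<le> Pwmax" using that by (simp add: S_def)
      then have "(norm f)^2 \<le> Pwmax / Pz" using Pz by (simp add: pos_le_divide_eq mult.commute)
      then show ?thesis by (simp add: real_le_rsqrt)
    qed
    then show ?thesis unfolding bounded_iff by blast
  qed
  have cpt: "compact S" using cl bd by (simp add: compact_eq_bounded_closed)
  have ne: "S \<noteq> {}" using ex by (auto simp: S_def)
  have pos: "g k (herm (h k) f) \<noteq> 0" if "f \<in> S" for f k
  proof -
    have "g k (herm (h k) f) \<ge> c k" using that by (simp add: S_def)
    then show ?thesis using c[of k] by linarith
  qed
  have cont: "continuous_on S Obj"
    unfolding Obj_def
    using pos by (intro continuous_intros continuous_on_subset[OF gcomp]) auto
  obtain fm where fm: "fm \<in> S" and mn: "\<And>y. y \<in> S \<Longrightarrow> Obj fm \<le> Obj y"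
    using continuous_attains_inf[OF cpt ne cont] by blast
  obtain p where p: "p \<in> colspace h" and hp: "\<And>k. herm (h k) p = herm (h k) fm" and np: "norm p \<le> norm fm"
    using proj[of h fm] by blast
  have np2: "(norm p)^2 \<le> (norm fm)^2" using np by (intro power_mono) simp_all
  have "Pz * (norm p)^2 \<le> Pz * (norm fm)^2" using np2 Pz by (simp add: mult_left_mono)
  then have pS: "p \<in> S" using fm hp unfolding S_def by simp
  have "Obj p \<le> Obj fm" unfolding Obj_def hp using np2 A by (simp add: mult_left_mono)
  then have "\<forall>f. f \<in> S \<longrightarrow> Obj p \<le> Obj f" using mn by (blast intro: order_trans)
  then have "\<exists>fopt\<in>colspace h. fopt \<in> S \<and> (\<forall>f. f \<in> S \<longrightarrow> Obj fopt \<le> Obj f)"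
    using p pS by blast
  then show ?thesis unfolding S_def Obj_def mem_Collect_eq .
qed

theorem lemma2:
  fixes h :: "'k::finite \<Rightarrow> complex ^ 'n"
    and lam Tw eta Pw0 Pwmax amax betamax :: real
    and u chi :: "'k \<Rightarrow> real"
  assumes "0 \<le> lam" "lam \<le> 1" "Tw > 0" "0 < eta" "eta \<le> 1"
    and "Pw0 > 0" "Pwmax > 0" "amax > 0" "betamax > 0"
    and "\<And>k. u k > 0" "\<And>k. chi k \<ge> 0"
  shows "((\<exists>f. feasible_P2 Pw0 Pwmax amax betamax u h f) \<longrightarrow>
           (\<exists>fopt \<in> colspace h. feasible_P2 Pw0 Pwmax amax betamax u h fopt \<and>
              (\<forall>f. feasible_P2 Pw0 Pwmax amax betamax u h f \<longrightarrow>
                   F_P2 lam Tw eta Pw0 chi h fopt \<le> F_P2 lam Tw eta Pw0 chi h f)))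
       \<and> (\<forall>fi. (\<exists>f. feasible_SCA Pw0 Pwmax amax betamax u h fi f) \<longrightarrow>
           (\<exists>fopt \<in> colspace h. feasible_SCA Pw0 Pwmax amax betamax u h fi fopt \<and>
              (\<forall>f. feasible_SCA Pw0 Pwmax amax betamax u h fi f \<longrightarrow>
                   F_SCA lam Tw eta Pw0 chi h fi fopt \<le> F_SCA lam Tw eta Pw0 chi h fi f)))"
proof -
  have A: "lam * (Tw / eta) * Pw0 \<ge> 0" using assms by simp
  have c: "(u k)^2 / betamax^2 > 0" for k using assms(10)[of k] assms(9) by simp
  have P1: "(\<exists>f. feasible_P2 Pw0 Pwmax amax betamax u h f) \<longrightarrow>
           (\<exists>fopt \<in> colspace h. feasible_P2 Pw0 Pwmax amax betamax u h fopt \<and>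
              (\<forall>f. feasible_P2 Pw0 Pwmax amax betamax u h f \<longrightarrow>
                   F_P2 lam Tw eta Pw0 chi h fopt \<le> F_P2 lam Tw eta Pw0 chi h f))"
    unfolding feasible_P2_def F_P2_def
    apply (intro impI)
    apply (rule main_gen[where g = "\<lambda>k z. (cmod z)^2" and c = "\<lambda>k. (u k)^2 / betamax^2" and A = "lam * (Tw / eta) * Pw0" and B = "1 - lam" and chi = chi and h = h and Pz = Pw0 and Pwmax = Pwmax and amax = amax])
    apply (intro continuous_intros)
    apply (rule c)
    apply (rule A)
    apply (rule assms(6))
    apply assumption
    done
  have P2: "\<forall>fi. (\<exists>f. feasible_SCA Pw0 Pwmax amax betamax u h fi f) \<longrightarrow>
           (\<exists>fopt \<in> colspace h. feasible_SCA Pw0 Pwmax amax betamax u h fi fopt \<and>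
              (\<forall>f. feasible_SCA Pw0 Pwmax amax betamax u h fi f \<longrightarrow>
                   F_SCA lam Tw eta Pw0 chi h fi fopt \<le> F_SCA lam Tw eta Pw0 chi h fi f))"
    unfolding feasible_SCA_def F_SCA_def ulin_def Let_def
    apply (intro allI impI)
    subgoal for fi
      apply (rule main_gen[where g = "\<lambda>k z. (cmod (herm (h k) fi))^2 + 2 * Re (cnj (herm (h k) fi) * (z - herm (h k) fi))" and c = "\<lambda>k. (u k)^2 / betamax^2" and A = "lam * (Tw / eta) * Pw0" and B = "1 - lam" and chi = chi and h = h and Pz = Pw0 and Pwmax = Pwmax and amax = amax])
      apply (intro continuous_intros)
      apply (rule c)
      apply (rule A)
      apply (rule assms(6))
      apply assumption
      done
    done
  show ?thesis using P1 P2 by blast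
qed

end
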